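(* Let $a:=\sum_{i=1}^{\infty}10^{1-\frac12 i(i+1)}$ (an irrational number). There exist a countable graph $G$ and a weight function $w:E(G)\to\{a,\,2a,\,2a-1\}$ such that $G$ has no strongly $w$-maximal matching. (Hence the rationality hypothesis cannot be dropped from the statement that every graph with finitely-valued rational edge weights has a strongly $w$-maximal matching.)
   Context: For a set $F$ of edges, $w[F]:=\sum_{e\in F}w(e)$. A matching $M$ in $G$ is called strongly $w$-maximal if $w[N\setminus M]\le w[M\setminus N]$ for every matching $N$ in $G$ with $|M\setminus N|<\infty$ and $|N\setminus M|<\infty$. *)

theory Defs
  imports Complex_Main
begin

text \<open>The constant a = sum over i >= 1 of 10^(1 - i(i+1)/2); summation index shifted: i+1 for i :: nat.\<close>
definition a_const :: real where
  "a_const = (\<Sum>i. 10 / 10 ^ ((Suc i) * (Suc i + 1) div 2))"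

definition simple_graph :: "'v set set \<Rightarrow> bool" where
  "simple_graph E \<longleftrightarrow> (\<forall>e\<in>E. \<exists>u v. u \<noteq> v \<and> e = {u, v})"

definition matching :: "'v set set \<Rightarrow> 'v set set \<Rightarrow> bool" where
  "matching E M \<longleftrightarrow> M \<subseteq> E \<and> (\<forall>e\<in>M. \<forall>f\<in>M. e \<noteq> f \<longrightarrow> e \<inter> f = {})"

definition strongly_w_maximal :: "'v set set \<Rightarrow> ('v set \<Rightarrow> real) \<Rightarrow> 'v set set \<Rightarrow> bool" where
  "strongly_w_maximal E w M \<longleftrightarrow> matching E M \<and>
     (\<forall>N. matching E N \<and> finite (M - N) \<and> finite (N - M) \<longrightarrow>
          sum w (N - M) \<le> sum w (M - N))"

end

theory Submission
  imports Defs "HOL-Library.Nat_Bijection"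
begin


definition TT :: "nat \<Rightarrow> nat" where "TT k = k * (k + 1) div 2"

lemma TT_Suc: "TT (Suc k) = TT k + Suc k"
  unfolding TT_def by (induction k) auto

lemma TT_mono: "i \<le> j \<Longrightarrow> TT i \<le> TT j"
proof (induction j)
  case 0 then show ?case by simp
next
  case (Suc j) then show ?case by (cases "i = Suc j") (auto simp: TT_Suc)
qed

lemma TT_ge: "TT (n + i + 1) \<ge> TT n + n + 1 + i"
proof (induction i)
  case 0 then show ?case by (simp add: TT_Suc)
next
  case (Suc i) then show ?case using TT_Suc[of "n + i + 1"] by simp
qed

definition af :: "nat \<Rightarrow> real" where "af i = 10 / 10 ^ TT (Suc i)"

lemma a_def': "a_const = suminf af"
  unfolding a_const_def af_def TT_def by simp

lemma af_pos: "af i > 0" unfolding af_def by simp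

lemma af_le: "af i \<le> (1/10) ^ i"
proof -
  have "TT (Suc i) \<ge> Suc i" using TT_ge[of 0 i] by (simp add: TT_def)
  then have "(10::real) ^ TT (Suc i) \<ge> 10 ^ Suc i" by (intro power_increasing) auto
  then have "af i \<le> 10 / 10 ^ Suc i" unfolding af_def
    by (intro divide_left_mono) auto
  also have "\<dots> = (1/10)^i" by (simp add: power_divide)
  finally show ?thesis .
qed

lemma af_summable: "summable af"
  by (rule summable_comparison_test[of _ "\<lambda>i. (1/10::real)^i"])
     (auto intro!: exI[of _ 0] simp: af_le less_imp_le[OF af_pos])




lemma approx_main:
  assumes n: "n \<ge> 1"
  shows "\<exists>N::nat. \<exists>t. real (10 ^ (TT n - 1)) * a_const = real N + t \<and> 0 < t \<and> t < (1/10)^n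
          \<and> (n = 1 \<longrightarrow> N = 1)"
proof -
  define Q :: real where "Q = real (10 ^ (TT n - 1))"
  have Tn: "TT n \<ge> 1" using TT_mono[OF n] by (simp add: TT_def)
  have Q10: "Q * 10 = 10 ^ TT n" unfolding Q_def using Tn
    by (metis of_nat_numeral of_nat_power power_Suc2 Suc_diff_1 less_le_trans zero_less_one le_eq_less_or_eq linorder_not_less)
  have sQ: "summable (\<lambda>i. Q * af i)" by (intro summable_mult af_summable)
  have sum1: "Q * a_const = (\<Sum>i. Q * af (i + n)) + (\<Sum>i<n. Q * af i)"
    unfolding a_def' using suminf_split_initial_segment[OF sQ, of n] suminf_mult[OF af_summable]
    by simp
  define N :: nat where "N = (\<Sum>i<n. 10 ^ (TT n - TT (Suc i)))"
  have termI: "Q * af i = 10 ^ (TT n - TT (Suc i))" if "i < n" for i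
  proof -
    have le: "TT (Suc i) \<le> TT n" using that by (intro TT_mono) simp
    have "Q * af i = 10 ^ TT n / 10 ^ TT (Suc i)" unfolding af_def using Q10
      by (simp add: field_simps)
    also have "\<dots> = 10 ^ (TT n - TT (Suc i))" using le by (simp add: power_diff)
    finally show ?thesis .
  qed
  have NI: "(\<Sum>i<n. Q * af i) = real N" unfolding N_def using termI by simp
  define t where "t = (\<Sum>i. Q * af (i + n))"
  have st: "summable (\<lambda>i. Q * af (i + n))" using sQ by (rule summable_ignore_initial_segment)
  have tpos: "t > 0" unfolding t_def
    by (rule suminf_pos[OF st]) (auto simp: Q_def af_pos)
  have tle: "Q * af (i + n) \<le> (1/10)^(n+1) * (1/10)^i" for i
  proof -
    have ge: "TT (n + i + 1) \<ge> TT n + (n + 1 + i)" using TT_ge[of n i] by simp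
    have "Q * af (i + n) = 10 ^ TT n / 10 ^ TT (n + i + 1)" unfolding af_def using Q10
      by (simp add: field_simps)
    also have "\<dots> \<le> 10 ^ TT n / 10 ^ (TT n + (n + 1 + i))"
      by (intro divide_left_mono power_increasing ge) auto
    also have "\<dots> = (1/10)^(n+1) * (1/10)^i"
      by (simp add: power_add power_divide field_simps)
    finally show ?thesis .
  qed
  have "t \<le> (\<Sum>i. (1/10)^(n+1) * (1/10::real)^i)" unfolding t_def
    by (rule suminf_le[OF tle st]) (intro summable_mult summable_geometric, simp)
  also have "\<dots> = (1/10)^(n+1) * (10/9)"
  proof -
    have "(\<Sum>i. (1/10::real)^i) = 10/9" by (subst suminf_geometric) auto
    moreover have "(\<Sum>i. (1/10::real)^(n+1) * (1/10)^i) = (1/10)^(n+1) * (\<Sum>i. (1/10::real)^i)"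
      by (rule suminf_mult) (rule summable_geometric, simp)
    ultimately show ?thesis by metis
  qed
  also have "\<dots> < (1/10)^n" by simp
  finally have tlt: "t < (1/10)^n" .
  have N1: "n = 1 \<longrightarrow> N = 1" unfolding N_def by (auto simp: TT_def)
  have "Q * a_const = real N + t" using sum1 NI unfolding t_def by simp
  then show ?thesis
    using tpos tlt N1 unfolding Q_def by blast
qed




definition dd :: real where "dd = a_const - 1"

lemma dd_bounds: "0 < dd" "dd < 1"
proof -
  obtain N t where "real (10 ^ (TT 1 - 1)) * a_const = real N + t" "0 < t" "t < (1/10)^1" "N = 1"
    using approx_main[of 1] by auto
  then show "0 < dd" "dd < 1" unfolding dd_def by (auto simp: TT_def)
qed

definition rr :: "nat \<Rightarrow> real" where "rr Q = frac (dd * real Q)"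

lemma rr_small: assumes "e > 0" shows "\<exists>Q. 0 < rr Q \<and> rr Q < e"
proof -
  obtain n where n: "(1/10::real)^n < e" using real_arch_pow_inv[OF assms, of "1/10"] by auto
  define n' where "n' = max n 1"
  have "(1/10::real)^n' \<le> (1/10)^n" unfolding n'_def by (intro power_decreasing) auto
  with n have n': "(1/10::real)^n' < e" "n' \<ge> 1" unfolding n'_def by linarith+
  obtain N t where Nt: "real (10 ^ (TT n' - 1)) * a_const = real N + t" "0 < t" "t < (1/10)^n'"
    using approx_main[OF n'(2)] by auto
  define Q :: nat where "Q = 10 ^ (TT n' - 1)"
  have "(1/10::real)^n' \<le> 1" by (intro power_le_one) auto
  then have t1: "t < 1" using Nt by linarith
  have "dd * real Q = t + of_int (int N - int Q)" using Nt(1) unfolding dd_def Q_def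
    by (simp add: algebra_simps)
  then have "rr Q = t" unfolding rr_def using Nt t1 by (simp add: frac_unique_iff)
  then show ?thesis using Nt n' by (intro exI[of _ Q]) auto
qed

lemma rr_lt1: "rr Q < 1" unfolding rr_def by (rule frac_lt_1)

definition gg :: "nat \<Rightarrow> nat \<Rightarrow> int" where "gg Q k = \<lfloor>dd * real k + 1 - rr Q\<rfloor>"
definition ss :: "nat \<Rightarrow> nat \<Rightarrow> real" where
  "ss Q j = of_int (gg Q (j div 2)) - dd * real ((j+1) div 2)"

lemma ss_bounds: "- rr Q - dd < ss Q j" "ss Q j \<le> 1 - rr Q"
proof -
  define k where "k = j div 2"
  have f1: "of_int (gg Q k) \<le> dd * real k + 1 - rr Q" "dd * real k + 1 - rr Q < of_int (gg Q k) + 1"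
    unfolding gg_def by linarith+
  consider "even j" "(j+1) div 2 = k" | "odd j" "(j+1) div 2 = k + 1" unfolding k_def
    by (cases "even j") (auto elim!: evenE oddE)
  then show "- rr Q - dd < ss Q j" "ss Q j \<le> 1 - rr Q"
    using f1 dd_bounds unfolding ss_def k_def[symmetric] by (cases; simp add: algebra_simps)+
qed

lemma ss_odd_step: "ss Q (2*k+1) - ss Q (2*k) = - dd"
  unfolding ss_def by (simp add: algebra_simps)

lemma ss_even_step: "ss Q (2*k+2) - ss Q (2*k+1) \<in> {0, 1}"
proof -
  have e: "(2*k+2) div 2 = k + 1" "(2*k+1) div 2 = k" "(2*k+2+1) div 2 = k+1" "(2*k+1+1) div 2 = k+1" by auto
  have "ss Q (2*k+2) - ss Q (2*k+1) = of_int (gg Q (k+1) - gg Q k)"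
    unfolding ss_def e by simp
  moreover have "gg Q (k+1) - gg Q k \<in> {0, 1}"
  proof -
    define x where "x = dd * real k + 1 - rr Q"
    have "dd * real (k+1) + 1 - rr Q = x + dd" unfolding x_def by (simp add: algebra_simps)
    then have "gg Q (k+1) = \<lfloor>x + dd\<rfloor>" "gg Q k = \<lfloor>x\<rfloor>" unfolding gg_def x_def by (auto simp: algebra_simps)
    moreover have "\<lfloor>x\<rfloor> \<le> \<lfloor>x + dd\<rfloor>" "\<lfloor>x + dd\<rfloor> \<le> \<lfloor>x\<rfloor> + 1"
      using dd_bounds by (auto intro: floor_mono) linarith
    ultimately show ?thesis by auto
  qed
  ultimately show ?thesis by auto
qed

lemma ss_0: assumes "rr Q > 0" shows "ss Q 0 = 0"
  using assms rr_lt1[of Q] unfolding ss_def gg_def by simp linarith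

lemma ss_end: "ss Q (2*Q) = 1 - rr Q"
proof -
  have "dd * real Q + 1 - rr Q = of_int (\<lfloor>dd * real Q\<rfloor> + 1)" unfolding rr_def frac_def by simp
  then have "gg Q Q = \<lfloor>dd * real Q\<rfloor> + 1" unfolding gg_def by (metis floor_of_int)
  then show ?thesis unfolding ss_def rr_def frac_def by simp
qed




definition LL :: "nat \<Rightarrow> nat" where "LL Q = 4 * Q + 2"

definition wt :: "nat \<Rightarrow> nat \<Rightarrow> real" where
  "wt Q i = (if odd i then 2 * a_const - 1 else if i = 0 then 2 * a_const
             else 2 * a_const - 1 + ss Q (i div 2) - ss Q (i div 2 - 1))"

lemma a_dd: "a_const = 1 + dd" unfolding dd_def by simp

lemma wt_vals: "wt Q i \<in> {a_const, 2 * a_const, 2 * a_const - 1}"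
proof (cases "odd i \<or> i = 0")
  case True then show ?thesis unfolding wt_def by auto
next
  case False
  then obtain j where ij: "i = 2 * j" "j \<ge> 1" by (auto elim!: evenE)
  show ?thesis
  proof (cases "odd j")
    case True
    then obtain k where "j = 2 * k + 1" by (auto elim!: oddE)
    then have "ss Q (i div 2) - ss Q (i div 2 - 1) = - dd" using ij ss_odd_step[of Q k] by simp
    then show ?thesis using False unfolding wt_def a_dd by auto
  next
    case False
    then obtain k where "j = 2 * k + 2" using ij
      by (metis evenE One_nat_def Suc_1 add.commute add_Suc_right mult_Suc_right not_less_eq_eq
          plus_1_eq_Suc mult_0_right le_zero_eq nat.exhaust zero_neq_one)
    then have "i div 2 = 2*k+2" "i div 2 - 1 = 2*k+1" using ij by simp_all
    then have "ss Q (i div 2) - ss Q (i div 2 - 1) \<in> {0, 1}" using ss_even_step[of Q k]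
      by simp
    then show ?thesis using \<open>\<not> (odd i \<or> i = 0)\<close> unfolding wt_def by auto
  qed
qed

lemma cover_eq:
  fixes f y :: "nat \<Rightarrow> real"
  assumes "finite I" "\<forall>i\<in>I. Suc i \<notin> I" "\<forall>i\<in>I. f i = y i + y (Suc i)"
  shows "sum f I = sum y (I \<union> Suc ` I)"
proof -
  have "sum f I = sum y I + sum (y \<circ> Suc) I" using assms(3) by (simp add: sum.distrib)
  also have "sum (y \<circ> Suc) I = sum y (Suc ` I)" by (simp add: sum.reindex)
  also have "sum y I + sum y (Suc ` I) = sum y (I \<union> Suc ` I)"
    using assms(1,2) by (intro sum.union_disjoint[symmetric]) auto
  finally show ?thesis .
qed

lemma cover_le:
  fixes f y :: "nat \<Rightarrow> real"
  assumes "finite I" "\<forall>i\<in>I. Suc i \<notin> I" "\<forall>i\<in>I. f i = y i + y (Suc i)"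
    "I \<union> Suc ` I \<subseteq> V" "finite V" "\<forall>v\<in>V. y v \<ge> 0"
  shows "sum f I \<le> sum y V"
  using cover_eq[OF assms(1-3)] sum_mono2[OF assms(5,4)] assms(6) by auto

definition y0 :: "nat \<Rightarrow> nat \<Rightarrow> real" where
  "y0 Q v = (if odd v then ss Q ((v - 1) div 2) + rr Q + dd
             else 2 * a_const - 1 - (ss Q ((v - 2) div 2) + rr Q + dd))"

definition y1 :: "nat \<Rightarrow> nat \<Rightarrow> real" where
  "y1 Q v = (if even v then ss Q (2 * Q) - ss Q (v div 2 - 1)
             else 2 * a_const - 1 + ss Q ((v - 1) div 2) - ss Q (2 * Q))"

lemma y0_tight: assumes "i \<ge> 1" shows "wt Q i = y0 Q i + y0 Q (Suc i)"
proof (cases "even i")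
  case True
  then obtain c where "i = 2 * c + 2" using assms
    by (metis evenE One_nat_def Suc_1 add.commute add_Suc_right mult_Suc_right not_less_eq_eq
          plus_1_eq_Suc mult_0_right le_zero_eq nat.exhaust zero_neq_one)
  then show ?thesis unfolding wt_def y0_def by (simp add: algebra_simps)
next
  case False
  then obtain c where "i = 2 * c + 1" by (auto elim!: oddE)
  then show ?thesis unfolding wt_def y0_def by (simp add: algebra_simps)
qed

lemma y0_nonneg: "v \<ge> 1 \<Longrightarrow> y0 Q v \<ge> 0"
  using ss_bounds[of Q] dd_bounds unfolding y0_def a_dd
  by (smt (verit))

lemma y1_tight: "i \<ge> 2 \<Longrightarrow> wt Q i = y1 Q i + y1 Q (Suc i)"
  unfolding wt_def y1_def
  by (cases "even i") (auto elim!: evenE oddE simp: algebra_simps)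

lemma y1_nonneg: "y1 Q v \<ge> 0"
  using ss_bounds[of Q] ss_end[of Q] dd_bounds unfolding y1_def a_dd
  by (smt (verit))

lemma y1_last: "y1 Q (LL Q) = 0"
  unfolding y1_def LL_def by simp




definition Iodd :: "nat \<Rightarrow> nat set" where "Iodd Q = {i. i < LL Q \<and> odd i}"
definition Iev :: "nat \<Rightarrow> nat set" where "Iev Q = {i. i < LL Q \<and> even i}"

lemma Iodd_cover: "Iodd Q \<union> Suc ` Iodd Q = {1..LL Q}"
proof (intro set_eqI iffI)
  fix x assume "x \<in> Iodd Q \<union> Suc ` Iodd Q" then show "x \<in> {1..LL Q}"
    unfolding Iodd_def LL_def by (auto simp: Suc_le_eq odd_pos)
next
  fix x assume x: "x \<in> {1..LL Q}"
  show "x \<in> Iodd Q \<union> Suc ` Iodd Q"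
  proof (cases "odd x")
    case True
    then have "x \<noteq> LL Q" unfolding LL_def by auto
    then show ?thesis using x True unfolding Iodd_def by auto
  next
    case False
    then have "x - 1 \<in> Iodd Q" "x = Suc (x - 1)" using x unfolding Iodd_def
      by (auto elim!: evenE)
    then show ?thesis by blast
  qed
qed

lemma Iev_cover: "(Iev Q - {0}) \<union> Suc ` (Iev Q - {0}) = {2..<LL Q}"
proof (intro set_eqI iffI)
  fix x assume "x \<in> (Iev Q - {0}) \<union> Suc ` (Iev Q - {0})" then show "x \<in> {2..<LL Q}"
    unfolding Iev_def LL_def by (auto elim!: evenE; presburger)
next
  fix x assume x: "x \<in> {2..<LL Q}"
  show "x \<in> (Iev Q - {0}) \<union> Suc ` (Iev Q - {0})"
  proof (cases "even x")
    case True
    then show ?thesis using x unfolding Iev_def by auto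
  next
    case False
    then have "x - 1 \<in> Iev Q - {0}" "x = Suc (x - 1)" using x unfolding Iev_def
      by (auto elim!: oddE)
    then show ?thesis by blast
  qed
qed

lemma nocons_odd: "\<forall>i\<in>Iodd Q. Suc i \<notin> Iodd Q" unfolding Iodd_def by auto
lemma nocons_ev: "\<forall>i\<in>Iev Q - {0}. Suc i \<notin> Iev Q - {0}" unfolding Iev_def by auto

lemma bound0:
  assumes "I \<subseteq> {1..<LL Q}" "\<forall>i\<in>I. Suc i \<notin> I"
  shows "sum (wt Q) I \<le> sum (wt Q) (Iodd Q)"
proof -
  have fI: "finite I" using assms(1) finite_subset by blast
  have "sum (wt Q) I \<le> sum (y0 Q) {1..LL Q}"
    by (rule cover_le[OF fI assms(2)]) (use assms(1) y0_tight y0_nonneg in auto)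
  also have "\<dots> = sum (wt Q) (Iodd Q)"
    unfolding Iodd_cover[symmetric]
    by (rule cover_eq[symmetric]) (auto simp: Iodd_def nocons_odd Suc_le_eq odd_pos intro!: y0_tight)
  finally show ?thesis .
qed

lemma bound1:
  assumes "I \<subseteq> {2..<LL Q}" "\<forall>i\<in>I. Suc i \<notin> I"
  shows "sum (wt Q) I \<le> sum (wt Q) (Iev Q - {0})"
proof -
  have fI: "finite I" using assms(1) finite_subset by blast
  have "sum (wt Q) I \<le> sum (y1 Q) {2..LL Q}"
    by (rule cover_le[OF fI assms(2)]) (use assms(1) y1_tight y1_nonneg in auto)
  also have "\<dots> = sum (y1 Q) {2..<LL Q}"
  proof -
    have "{2..LL Q} = insert (LL Q) {2..<LL Q}" unfolding LL_def by auto
    then show ?thesis using y1_last[of Q] by simp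
  qed
  also have "\<dots> = sum (wt Q) (Iev Q - {0})"
    unfolding Iev_cover[symmetric]
  proof (rule cover_eq[symmetric])
    show "finite (Iev Q - {0})" unfolding Iev_def by auto
    show "\<forall>i\<in>Iev Q - {0}. Suc i \<notin> Iev Q - {0}" by (rule nocons_ev)
    show "\<forall>i\<in>Iev Q - {0}. wt Q i = y1 Q i + y1 Q (Suc i)"
      unfolding Iev_def by (auto intro!: y1_tight elim!: evenE)
  qed
  finally show ?thesis .
qed

lemma p_val:
  assumes "rr Q > 0"
  shows "sum (wt Q) (Iev Q) - sum (wt Q) (Iodd Q) = 2 - rr Q"
proof -
  have ev: "Iev Q = (\<lambda>j. 2 * j) ` {..<2*Q+1}" unfolding Iev_def LL_def
    by (auto elim!: evenE)
  have od: "Iodd Q = (\<lambda>j. 2 * j + 1) ` {..<2*Q+1}" unfolding Iodd_def LL_def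
    by (auto elim!: oddE)
  have "sum (wt Q) (Iev Q) - sum (wt Q) (Iodd Q) = (\<Sum>j<2*Q+1. wt Q (2*j) - wt Q (2*j+1))"
    unfolding ev od by (simp add: sum.reindex inj_on_def sum_subtractf)
  also have "\<dots> = (wt Q 0 - wt Q 1) + (\<Sum>j<2*Q. wt Q (2*Suc j) - wt Q (2*Suc j+1))"
    unfolding Suc_eq_plus1[symmetric] sum.lessThan_Suc_shift by simp
  also have "(\<Sum>j<2*Q. wt Q (2*Suc j) - wt Q (2*Suc j+1)) = (\<Sum>j<2*Q. ss Q (Suc j) - ss Q j)"
    by (intro sum.cong) (auto simp: wt_def)
  also have "\<dots> = ss Q (2*Q) - ss Q 0" by (rule sum_lessThan_telescope)
  also have "wt Q 0 - wt Q 1 = 1" unfolding wt_def by simp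
  finally show ?thesis using ss_end[of Q] ss_0[OF assms] by simp
qed




definition vx :: "nat \<Rightarrow> nat \<Rightarrow> nat" where
  "vx Q i = (if i = 0 then 0 else Suc (prod_encode (Q, i)))"
definition ed :: "nat \<Rightarrow> nat \<Rightarrow> nat set" where "ed Q i = {vx Q i, vx Q (Suc i)}"
definition Bs :: "nat set" where "Bs = {Q. 0 < rr Q}"
definition XB :: "nat \<Rightarrow> nat set set" where "XB Q = ed Q ` {..<LL Q}"
definition EE :: "nat set set" where "EE = (\<Union>Q\<in>Bs. XB Q)"
definition ww :: "nat set \<Rightarrow> real" where "ww e = (THE x. \<exists>Q i. e = ed Q i \<and> x = wt Q i)"

lemma vx0: "vx Q i = 0 \<longleftrightarrow> i = 0" unfolding vx_def by auto

lemma vx_eq: "vx Q i = vx Q' i' \<longleftrightarrow> (i = 0 \<and> i' = 0) \<or> (Q = Q' \<and> i = i')"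
  unfolding vx_def using inj_prod_encode[unfolded inj_def] by auto

lemma ed_inj: assumes "ed Q i = ed Q' i'" shows "Q = Q' \<and> i = i'"
proof -
  have "vx Q (Suc i) \<in> ed Q' i'" using assms unfolding ed_def by auto
  then have "vx Q (Suc i) = vx Q' i' \<or> vx Q (Suc i) = vx Q' (Suc i')" unfolding ed_def by auto
  then show ?thesis
  proof
    assume h: "vx Q (Suc i) = vx Q' i'"
    then have "Q = Q'" "i' = Suc i" unfolding vx_eq by auto
    moreover have "vx Q i \<in> ed Q' i'" using assms unfolding ed_def by auto
    ultimately have "vx Q i = vx Q (Suc i) \<or> vx Q i = vx Q (Suc (Suc i))" unfolding ed_def by auto
    then show ?thesis unfolding vx_eq by auto
  next
    assume "vx Q (Suc i) = vx Q' (Suc i')"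
    then show ?thesis unfolding vx_eq by auto
  qed
qed

lemma ww_ed: "ww (ed Q i) = wt Q i"
  unfolding ww_def by (rule the_equality) (auto dest: ed_inj)

lemma ed0: "0 \<in> ed Q i \<longleftrightarrow> i = 0"
  unfolding ed_def using vx0[of Q i] vx0[of Q "Suc i"] by auto

lemma ed_diff: assumes "Q \<noteq> Q'" "i \<noteq> 0 \<or> j \<noteq> 0" shows "ed Q i \<inter> ed Q' j = {}"
  using assms unfolding ed_def by (auto simp: vx_eq)

lemma ed_same: assumes "i \<noteq> j" "Suc i \<noteq> j" "Suc j \<noteq> i" shows "ed Q i \<inter> ed Q j = {}"
  using assms unfolding ed_def by (auto simp: vx_eq)

lemma ed_adj: "ed Q i \<inter> ed Q (Suc i) \<noteq> {}" unfolding ed_def by auto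

lemma ed_ne: "ed Q i \<noteq> ed Q j \<longleftrightarrow> i \<noteq> j" using ed_inj by auto

lemma simple: "simple_graph EE"
proof -
  have "vx Q i \<noteq> vx Q (Suc i)" for Q i unfolding vx_eq by auto
  then show ?thesis unfolding simple_graph_def EE_def XB_def ed_def by blast
qed

lemma weights: "\<forall>e\<in>EE. ww e \<in> {a_const, 2 * a_const, 2 * a_const - 1}"
  unfolding EE_def XB_def using ww_ed wt_vals by auto

lemma improve:
  fixes E :: "'v set set" and w :: "'v set \<Rightarrow> real"
  assumes "matching E M" "finite X" "K \<subseteq> X" "matching E ((M - X) \<union> K)"
    "sum w (M \<inter> X) < sum w K"
  shows "\<not> strongly_w_maximal E w M"
proof
  assume sm: "strongly_w_maximal E w M"
  define N where "N = (M - X) \<union> K"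
  have fK: "finite K" using assms(2,3) finite_subset by blast
  have NM: "N - M = K - (M \<inter> X)" unfolding N_def using assms(3) by auto
  have MN: "M - N = (M \<inter> X) - K" unfolding N_def by auto
  have fin: "finite (M - N)" "finite (N - M)" unfolding NM MN using fK assms(2) by auto
  have "sum w (N - M) \<le> sum w (M - N)" using sm assms(4) fin unfolding strongly_w_maximal_def N_def
    by blast
  moreover have "sum w K = sum w (K - (M \<inter> X)) + sum w (K \<inter> (M \<inter> X))"
    using sum.Int_Diff[OF fK, of w "M \<inter> X"] by simp
  moreover have "sum w (M \<inter> X) = sum w ((M \<inter> X) - K) + sum w (K \<inter> (M \<inter> X))"
  proof -
    have "K \<inter> (M \<inter> X) = (M \<inter> X) \<inter> K" by blast
    then show ?thesis using assms(2) sum.Int_Diff[of "M \<inter> X" w K] by simp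
  qed
  ultimately show False using assms(5) unfolding NM MN by linarith
qed




definition IM :: "nat set set \<Rightarrow> nat \<Rightarrow> nat set" where
  "IM M Q = {i. i < LL Q \<and> ed Q i \<in> M}"

lemma EE_form: "e \<in> EE \<Longrightarrow> \<exists>Q i. Q \<in> Bs \<and> i < LL Q \<and> e = ed Q i"
  unfolding EE_def XB_def by auto

lemma inj_ed: "inj_on (ed Q) I" unfolding inj_on_def using ed_inj by blast

lemma sum_img: "sum ww (ed Q ` I) = sum (wt Q) I"
  by (subst sum.reindex[OF inj_ed]) (simp add: comp_def ww_ed)

lemma M_XB: "M \<inter> XB Q = ed Q ` IM M Q" unfolding XB_def IM_def by auto

lemma finite_IM: "finite (IM M Q)" unfolding IM_def by auto

lemma IM_nocons: assumes "matching E M" shows "\<forall>i\<in>IM M Q. Suc i \<notin> IM M Q"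
proof (intro ballI notI)
  fix i assume "i \<in> IM M Q" "Suc i \<in> IM M Q"
  then have "ed Q i \<in> M" "ed Q (Suc i) \<in> M" unfolding IM_def by auto
  moreover have "ed Q i \<noteq> ed Q (Suc i)" using ed_ne by auto
  ultimately have "ed Q i \<inter> ed Q (Suc i) = {}" using assms unfolding matching_def by blast
  then show False using ed_adj by blast
qed

lemma XB_disj: assumes "Q \<noteq> Q'" shows "XB Q \<inter> XB Q' = {}"
proof (rule ccontr)
  assume "XB Q \<inter> XB Q' \<noteq> {}"
  then obtain i j where "ed Q i = ed Q' j" unfolding XB_def by auto
  then show False using ed_inj assms by blast
qed

lemma XB_sub: "Q \<in> Bs \<Longrightarrow> XB Q \<subseteq> EE" unfolding EE_def by (rule UN_upper)

lemma odd_sub: "ed Q ` Iodd Q \<subseteq> XB Q" unfolding XB_def Iodd_def by auto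
lemma ev_sub: "ed Q ` Iev Q \<subseteq> XB Q" unfolding XB_def Iev_def by auto

lemma match_img:
  assumes "\<forall>i\<in>I. \<forall>j\<in>I. i \<noteq> j \<longrightarrow> Suc i \<noteq> j"
  shows "\<forall>e\<in>ed Q ` I. \<forall>f\<in>ed Q ` I. e \<noteq> f \<longrightarrow> e \<inter> f = {}"
proof (intro ballI impI)
  fix e f assume "e \<in> ed Q ` I" "f \<in> ed Q ` I" "e \<noteq> f"
  then obtain i j where ij: "i \<in> I" "j \<in> I" "e = ed Q i" "f = ed Q j" "i \<noteq> j" by auto
  then have "Suc i \<noteq> j" "Suc j \<noteq> i" using assms by auto
  then show "e \<inter> f = {}" using ij ed_same by simp
qed

lemma IM_sum_bound_hub:
  assumes "matching E M" "0 \<in> IM M Q"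
  shows "sum (wt Q) (IM M Q) \<le> sum (wt Q) (Iev Q)"
proof -
  have nc: "\<forall>i\<in>IM M Q. Suc i \<notin> IM M Q" by (rule IM_nocons[OF assms(1)])
  have "1 \<notin> IM M Q" using nc assms(2) by force
  have sub: "IM M Q - {0} \<subseteq> {2..<LL Q}"
  proof
    fix x assume x: "x \<in> IM M Q - {0}"
    then have "x \<noteq> 1" "x \<noteq> 0" "x < LL Q" using \<open>1 \<notin> IM M Q\<close> unfolding IM_def by auto
    then show "x \<in> {2..<LL Q}" by auto
  qed
  have "sum (wt Q) (IM M Q) = wt Q 0 + sum (wt Q) (IM M Q - {0})"
    using assms(2) finite_IM by (simp add: sum.remove)
  also have "sum (wt Q) (IM M Q - {0}) \<le> sum (wt Q) (Iev Q - {0})"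
    by (rule bound1[OF sub]) (use nc in auto)
  also have "wt Q 0 + sum (wt Q) (Iev Q - {0}) = sum (wt Q) (Iev Q)"
  proof -
    have "finite (Iev Q)" "0 \<in> Iev Q" unfolding Iev_def LL_def by auto
    then show ?thesis using sum.remove[of "Iev Q" 0 "wt Q"] by simp
  qed
  finally show ?thesis by simp
qed

lemma IM_sum_bound_nohub:
  assumes "matching E M" "0 \<notin> IM M Q"
  shows "sum (wt Q) (IM M Q) \<le> sum (wt Q) (Iodd Q)"
proof -
  have sub: "IM M Q \<subseteq> {1..<LL Q}"
  proof
    fix x assume x: "x \<in> IM M Q"
    then have "x \<noteq> 0" "x < LL Q" using assms(2) unfolding IM_def by (cases x; auto)+
    then show "x \<in> {1..<LL Q}" by auto
  qed
  show ?thesis by (rule bound0[OF sub IM_nocons[OF assms(1)]])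
qed

lemma Iodd_nc: "\<forall>i\<in>Iodd Q. \<forall>j\<in>Iodd Q. i \<noteq> j \<longrightarrow> Suc i \<noteq> j" unfolding Iodd_def by auto
lemma Iev_nc: "\<forall>i\<in>Iev Q. \<forall>j\<in>Iev Q. i \<noteq> j \<longrightarrow> Suc i \<noteq> j" unfolding Iev_def by auto

lemma hub_M:
  assumes "matching EE M" "e \<in> M" "0 \<in> e" "ed Q 0 \<in> M" "e \<in> EE"
  shows "e = ed Q 0"
proof (rule ccontr)
  assume "e \<noteq> ed Q 0"
  then have "e \<inter> ed Q 0 = {}" using assms(1,2,4) unfolding matching_def by blast
  then show False using assms(3) ed0[of Q 0] by blast
qed


lemma no_smax: "\<not> strongly_w_maximal EE ww M"
proof
  assume sm: "strongly_w_maximal EE ww M"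
  then have mM: "matching EE M" unfolding strongly_w_maximal_def by auto
  then have MEE: "M \<subseteq> EE" unfolding matching_def by auto
  show False
  proof (cases "\<exists>Q\<in>Bs. ed Q 0 \<in> M")
    case True
    then obtain Q where Q: "Q \<in> Bs" "ed Q 0 \<in> M" by auto
    obtain Q' where Q': "0 < rr Q'" "rr Q' < rr Q" using rr_small[of "rr Q"] Q(1) unfolding Bs_def by auto
    then have Q'B: "Q' \<in> Bs" unfolding Bs_def by auto
    have QQ: "Q \<noteq> Q'" using Q' by auto
    define X where "X = XB Q \<union> XB Q'"
    define K where "K = ed Q ` Iodd Q \<union> ed Q' ` Iev Q'"
    have fX: "finite X" unfolding X_def XB_def by auto
    have KX: "K \<subseteq> X" unfolding K_def X_def using odd_sub ev_sub by blast
    have sumK: "sum ww K = sum (wt Q) (Iodd Q) + sum (wt Q') (Iev Q')"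
    proof -
      have "ed Q ` Iodd Q \<inter> ed Q' ` Iev Q' = {}" using XB_disj[OF QQ] odd_sub ev_sub by blast
      then show ?thesis unfolding K_def
        by (subst sum.union_disjoint) (auto simp: sum_img Iodd_def Iev_def)
    qed
    have sumM: "sum ww (M \<inter> X) = sum (wt Q) (IM M Q) + sum (wt Q') (IM M Q')"
    proof -
      have "M \<inter> X = (M \<inter> XB Q) \<union> (M \<inter> XB Q')" unfolding X_def by auto
      moreover have "(M \<inter> XB Q) \<inter> (M \<inter> XB Q') = {}" using XB_disj[OF QQ] by blast
      ultimately have "sum ww (M \<inter> X) = sum ww (ed Q ` IM M Q) + sum ww (ed Q' ` IM M Q')"
        unfolding M_XB by (simp add: sum.union_disjoint finite_IM)
      then show ?thesis by (simp add: sum_img)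
    qed
    have b1: "sum (wt Q) (IM M Q) \<le> sum (wt Q) (Iev Q)"
      by (rule IM_sum_bound_hub[OF mM]) (use Q in \<open>auto simp: IM_def LL_def\<close>)
    have "0 \<notin> IM M Q'"
    proof
      assume "0 \<in> IM M Q'"
      then have "ed Q' 0 \<in> M" unfolding IM_def by auto
      moreover have "0 \<in> ed Q' 0" using ed0 by simp
      ultimately have "ed Q' 0 = ed Q 0" using hub_M[OF mM _ _ Q(2)] MEE by blast
      then show False using QQ ed_inj by blast
    qed
    then have b2: "sum (wt Q') (IM M Q') \<le> sum (wt Q') (Iodd Q')" by (rule IM_sum_bound_nohub[OF mM])
    have p1: "sum (wt Q) (Iev Q) - sum (wt Q) (Iodd Q) = 2 - rr Q" using Q(1) p_val unfolding Bs_def by auto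
    have p2: "sum (wt Q') (Iev Q') - sum (wt Q') (Iodd Q') = 2 - rr Q'" using Q'(1) p_val by auto
    have lt: "sum ww (M \<inter> X) < sum ww K" unfolding sumM sumK using b1 b2 p1 p2 Q'(2) by linarith
    have mN: "matching EE ((M - X) \<union> K)"
      unfolding matching_def
    proof (intro conjI ballI impI)
      show "M - X \<union> K \<subseteq> EE" using MEE KX XB_sub[OF Q(1)] XB_sub[OF Q'B] unfolding X_def by blast
    next
      fix e f assume e: "e \<in> M - X \<union> K" and f: "f \<in> M - X \<union> K" and ef: "e \<noteq> f"
      have MX: "\<exists>Q'' i. Q'' \<noteq> Q \<and> Q'' \<noteq> Q' \<and> i \<noteq> 0 \<and> g = ed Q'' i" if g: "g \<in> M - X" for g
      proof -
        obtain Q'' i where g': "Q'' \<in> Bs" "i < LL Q''" "g = ed Q'' i" using EE_form g MEE by blast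
        have "Q'' \<noteq> Q" "Q'' \<noteq> Q'" using g g' unfolding X_def XB_def by auto
        moreover have "i \<noteq> 0"
        proof
          assume "i = 0"
          then have "0 \<in> g" "g \<in> M" "g \<in> EE" using g g' MEE ed0 by auto
          then have "g = ed Q 0" using hub_M[OF mM _ _ Q(2)] by blast
          then show False using g Q(2) unfolding X_def XB_def LL_def by auto
        qed
        ultimately show ?thesis using g' by blast
      qed
      have KQ: "(\<exists>i. i \<noteq> 0 \<and> g = ed Q i \<and> i \<in> Iodd Q) \<or> (\<exists>i. g = ed Q' i \<and> i \<in> Iev Q')" if "g \<in> K" for g
      proof (cases "g \<in> ed Q ` Iodd Q")
        case True
        then obtain i where "i \<in> Iodd Q" "g = ed Q i" by auto
        moreover then have "i \<noteq> 0" unfolding Iodd_def by (auto simp: odd_pos)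
        ultimately show ?thesis by blast
      next
        case False
        then show ?thesis using that unfolding K_def by auto
      qed
      show "e \<inter> f = {}"
      proof (cases "e \<in> M - X")
        case eM: True
        show ?thesis
        proof (cases "f \<in> M - X")
          case True then show ?thesis using mM eM ef unfolding matching_def by blast
        next
          case False
          then have fK: "f \<in> K" using f by auto
          obtain Q'' i where e': "Q'' \<noteq> Q" "Q'' \<noteq> Q'" "i \<noteq> 0" "e = ed Q'' i" using MX[OF eM] by blast
          from KQ[OF fK] show ?thesis
          proof
            assume "\<exists>j. j \<noteq> 0 \<and> f = ed Q j \<and> j \<in> Iodd Q"
            then obtain j where "f = ed Q j" by blast
            then show ?thesis using e' ed_diff[of Q'' Q i j] by simp
          next
            assume "\<exists>j. f = ed Q' j \<and> j \<in> Iev Q'"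
            then obtain j where "f = ed Q' j" by blast
            then show ?thesis using e' ed_diff[of Q'' Q' i j] by simp
          qed
        qed
      next
        case eK': False
        then have eK: "e \<in> K" using e by auto
        show ?thesis
        proof (cases "f \<in> M - X")
          case True
          obtain Q'' i where f': "Q'' \<noteq> Q" "Q'' \<noteq> Q'" "i \<noteq> 0" "f = ed Q'' i" using MX[OF True] by blast
          from KQ[OF eK] show ?thesis
          proof
            assume "\<exists>j. j \<noteq> 0 \<and> e = ed Q j \<and> j \<in> Iodd Q"
            then obtain j where "e = ed Q j" by blast
            then show ?thesis using f' ed_diff[of Q'' Q i j] by (simp add: Int_commute)
          next
            assume "\<exists>j. e = ed Q' j \<and> j \<in> Iev Q'"
            then obtain j where "e = ed Q' j" by blast
            then show ?thesis using f' ed_diff[of Q'' Q' i j] by (simp add: Int_commute)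
          qed
        next
          case False
          then have fK: "f \<in> K" using f by auto
          show ?thesis
          proof (cases "\<exists>i. e = ed Q i \<and> i \<in> Iodd Q")
            case eo: True
            then obtain i where i: "e = ed Q i" "i \<in> Iodd Q" by auto
            show ?thesis
            proof (cases "\<exists>j. f = ed Q j \<and> j \<in> Iodd Q")
              case True
              then obtain j where "f = ed Q j" "j \<in> Iodd Q" by auto
              then show ?thesis using i ef match_img[OF Iodd_nc] by blast
            next
              case False
              then obtain j where "f = ed Q' j" using KQ[OF fK] by blast
              moreover have "i \<noteq> 0" using i unfolding Iodd_def by (auto simp: odd_pos)
              ultimately show ?thesis using i ed_diff[OF QQ] by blast
            qed
          next
            case False
            then obtain i where i: "e = ed Q' i" "i \<in> Iev Q'" using KQ[OF eK] by blast
            show ?thesis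
            proof (cases "\<exists>j. f = ed Q' j \<and> j \<in> Iev Q'")
              case True
              then obtain j where "f = ed Q' j" "j \<in> Iev Q'" by auto
              then show ?thesis using i ef match_img[OF Iev_nc] by blast
            next
              case False
              then obtain j where j: "j \<noteq> 0" "f = ed Q j" using KQ[OF fK] by blast
              then show ?thesis using i ed_diff[OF QQ, of j i] by (simp add: Int_commute)
            qed
          qed
        qed
      qed
    qed
    have "\<not> strongly_w_maximal EE ww M" by (rule improve[OF mM fX KX mN lt])
    then show False using sm by simp
  next
    case False
    obtain Q where Q0: "0 < rr Q" using rr_small[of 1] by auto
    then have Q: "Q \<in> Bs" unfolding Bs_def by auto
    define X where "X = XB Q"
    define K where "K = ed Q ` Iev Q"
    have fX: "finite X" unfolding X_def XB_def by auto
    have KX: "K \<subseteq> X" unfolding K_def X_def using ev_sub by blast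
    have "0 \<notin> IM M Q" using False Q unfolding IM_def by auto
    then have b: "sum (wt Q) (IM M Q) \<le> sum (wt Q) (Iodd Q)" by (rule IM_sum_bound_nohub[OF mM])
    have p: "sum (wt Q) (Iev Q) - sum (wt Q) (Iodd Q) = 2 - rr Q" using Q0 p_val by auto
    have lt: "sum ww (M \<inter> X) < sum ww K"
      unfolding X_def K_def M_XB sum_img using b p rr_lt1[of Q] by linarith
    have mN: "matching EE ((M - X) \<union> K)"
      unfolding matching_def
    proof (intro conjI ballI impI)
      show "M - X \<union> K \<subseteq> EE" using MEE KX XB_sub[OF Q] unfolding X_def by blast
    next
      fix e f assume e: "e \<in> M - X \<union> K" and f: "f \<in> M - X \<union> K" and ef: "e \<noteq> f"
      have MX: "\<exists>Q'' i. Q'' \<noteq> Q \<and> i \<noteq> 0 \<and> g = ed Q'' i" if g: "g \<in> M - X" for g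
      proof -
        obtain Q'' i where g': "Q'' \<in> Bs" "i < LL Q''" "g = ed Q'' i" using EE_form g MEE by blast
        have "Q'' \<noteq> Q" using g g' unfolding X_def XB_def by auto
        moreover have "i \<noteq> 0" using False g g' by (cases i) auto
        ultimately show ?thesis using g' by blast
      qed
      show "e \<inter> f = {}"
      proof (cases "e \<in> M - X")
        case eM: True
        show ?thesis
        proof (cases "f \<in> M - X")
          case True then show ?thesis using mM eM ef unfolding matching_def by blast
        next
          case False
          then obtain j where "f = ed Q j" using f unfolding K_def by auto
          moreover obtain Q'' i where "Q'' \<noteq> Q" "i \<noteq> 0" "e = ed Q'' i" using MX[OF eM] by blast
          ultimately show ?thesis using ed_diff[of Q'' Q i j] by simp
        qed
      next
        case False
        then obtain i where i: "e = ed Q i" "i \<in> Iev Q" using e unfolding K_def by auto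
        show ?thesis
        proof (cases "f \<in> M - X")
          case True
          obtain Q'' j where "Q'' \<noteq> Q" "j \<noteq> 0" "f = ed Q'' j" using MX[OF True] by blast
          then show ?thesis using i ed_diff[of Q'' Q j i] by (simp add: Int_commute)
        next
          case False
          then obtain j where "f = ed Q j" "j \<in> Iev Q" using f unfolding K_def by auto
          then show ?thesis using i ef match_img[OF Iev_nc] by blast
        qed
      qed
    qed
    have "\<not> strongly_w_maximal EE ww M" by (rule improve[OF mM fX KX mN lt])
    then show False using sm by simp
  qed
qed

theorem mainTheorem9:
  shows "\<exists>(E :: nat set set) (w :: nat set \<Rightarrow> real).
           simple_graph E \<and>
           (\<forall>e\<in>E. w e \<in> {a_const, 2 * a_const, 2 * a_const - 1}) \<and>
           \<not> (\<exists>M. strongly_w_maximal E w M)"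
  using simple weights no_smax by blast


end
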